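(* Let $-\infty\le l<r\le+\infty$, let $D$ be an interval with endpoints $l$ and $r$ (each endpoint may or may not belong to $D$), and write $\mathcal I=(l,r)$. Let $X_t$ be a regular diffusion with values in $D$ solving $dX_t=a(X_t)\,dt+\sigma(X_t)\,dw_t$, $X_0=x$, where $w_t$ is a standard Wiener process, $a:D\to\mathbb R$, $\sigma:D\to\mathbb R_+$, and for every $x\in\mathcal I$ there is $\varepsilon>0$ with $\int_{x-\varepsilon}^{x+\varepsilon}\frac{1+|a(y)|}{\sigma^2(y)}\,dy<\infty$. Let $\rho>0$ be a discount rate and $I$ an investment cost with $I<r$. Let $\psi$ be an increasing positive fundamental solution on $\mathcal I$ of $a(x)f'(x)+\frac12\sigma^2(x)f''(x)=\rho f(x)$. For $p\in\mathcal I$ let $\tau_p=\inf\{t\ge0: X_t\ge p\}$ and $$V(p;x)=\mathbb E^x\big[(X_{\tau_p}-I)e^{-\rho\tau_p}\mathbf 1_{\{\tau_p<\infty\}}\big]$$ (so $V(p;x)=x-I$ for $x\ge p$ and $V(p;x)=(p-I)\mathbb E^x e^{-\rho\tau_p}$ for $x<p$). Then a threshold $p^*\in\mathcal I$ satisfies $V(p^*;x)\ge V(p;x)$ for all $p\in\mathcal I$ and all $x\in\mathcal I$ if and only if (i) $\frac{p-I}{\psi(p)}\le\frac{p^*-I}{\psi(p^* )}$ whenever $p<p^*$ (with $p\in\mathcal I$), and (ii) the function $p\mapsto\frac{p-I}{\psi(p)}$ does not increase on $\{p\in\mathcal I: p\ge p^*\}$.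
   Context: $\mathbb E^x$ denotes expectation for the process started at $x$. Regularity means that from any $x\in\mathcal I$ the process reaches any $y\in\mathcal I$ in finite time with positive probability. The increasing fundamental solution $\psi$ (unique up to a positive multiplicative constant, with absolutely continuous derivative, solving the ODE a.e. on $\mathcal I$, and satisfying $0<\psi<\infty$ on $\mathcal I$) satisfies $\mathbb E^x e^{-\rho T_p}=\psi(x)/\psi(p)$ for $x<p$, where $T_p$ is the first hitting time of $p$. *)

theory Defs
  imports "HOL-Probability.Probability"
begin

definition open_int :: "ereal \<Rightarrow> ereal \<Rightarrow> real set" where
  "open_int l r = {x. l < ereal x \<and> ereal x < r}"

definition entrance_time :: "(real \<Rightarrow> 'w \<Rightarrow> real) \<Rightarrow> real \<Rightarrow> 'w \<Rightarrow> ereal" where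
  "entrance_time X p w = Inf (ereal ` {t. 0 \<le> t \<and> p \<le> X t w})"

definition hitting_time :: "(real \<Rightarrow> 'w \<Rightarrow> real) \<Rightarrow> real \<Rightarrow> 'w \<Rightarrow> ereal" where
  "hitting_time X y w = Inf (ereal ` {t. 0 \<le> t \<and> X t w = y})"

definition disc_payoff :: "(real \<Rightarrow> 'w \<Rightarrow> real) \<Rightarrow> real \<Rightarrow> real \<Rightarrow> real \<Rightarrow> 'w \<Rightarrow> real" where
  "disc_payoff X \<rho> I p w =
     (let \<tau> = entrance_time X p w in
      if \<tau> < \<infinity> then (X (real_of_ereal \<tau>) w - I) * exp (- \<rho> * real_of_ereal \<tau>) else 0)"

definition value_fn :: "(real \<Rightarrow> 'w measure) \<Rightarrow> (real \<Rightarrow> 'w \<Rightarrow> real) \<Rightarrow> real \<Rightarrow> real \<Rightarrow> real \<Rightarrow> real \<Rightarrow> real" where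
  "value_fn M X \<rho> I p x = integral\<^sup>L (M x) (disc_payoff X \<rho> I p)"

end

theory Submission
  imports Defs
begin

lemma ereal_Inf_min:
  fixes S :: "real set"
  assumes "s0 \<in> S" "\<And>s. s \<in> S \<Longrightarrow> s0 \<le> s"
  shows "Inf (ereal ` S) = ereal s0"
  by (rule Inf_eqI) (use assms in auto)

lemma path_min:
  fixes X :: "real \<Rightarrow> 'w \<Rightarrow> real"
  assumes cont: "continuous_on {0..} (\<lambda>t. X t w)"
    and ne: "{t. 0 \<le> t \<and> p \<le> X t w} \<noteq> {}"
  shows "Inf {t. 0 \<le> t \<and> p \<le> X t w} \<in> {t. 0 \<le> t \<and> p \<le> X t w}"
proof -
  have eq: "{t. 0 \<le> t \<and> p \<le> X t w} = {0..} \<inter> (\<lambda>t. X t w) -` {p..}" by auto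
  have "closed ({0..} \<inter> (\<lambda>t. X t w) -` {p..})"
    by (rule continuous_closed_preimage[OF cont]) (auto intro: closed_atLeast)
  then show ?thesis using ne unfolding eq
    by (intro closed_contains_Inf) (auto simp: bdd_below_def)
qed

lemma entrance_eq:
  fixes X :: "real \<Rightarrow> 'w \<Rightarrow> real"
  assumes cont: "continuous_on {0..} (\<lambda>t. X t w)"
  shows "entrance_time X p w = (if {t. 0 \<le> t \<and> p \<le> X t w} = {} then \<infinity>
            else ereal (Inf {t. 0 \<le> t \<and> p \<le> X t w}))"
proof (cases "{t. 0 \<le> t \<and> p \<le> X t w} = {}")
  case True then show ?thesis by (simp only: entrance_time_def True image_empty Inf_empty if_True top_ereal_def)
next
  case False
  let ?S = "{t. 0 \<le> t \<and> p \<le> X t w}"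
  have "Inf ?S \<in> ?S" using path_min[where X=X and w=w and p=p, OF cont False] .
  moreover have "\<And>s. s \<in> ?S \<Longrightarrow> Inf ?S \<le> s" by (intro cInf_lower) (auto simp: bdd_below_def)
  ultimately show ?thesis using False unfolding entrance_time_def
    by (subst ereal_Inf_min) auto
qed

lemma entrance_start:
  fixes X :: "real \<Rightarrow> 'w \<Rightarrow> real"
  assumes "p \<le> X 0 w"
  shows "entrance_time X p w = 0"
  unfolding entrance_time_def zero_ereal_def
  by (rule ereal_Inf_min) (use assms in auto)

lemma hit_eq:
  fixes X :: "real \<Rightarrow> 'w \<Rightarrow> real"
  assumes cont: "continuous_on {0..} (\<lambda>t. X t w)" and x0: "X 0 w < p"
  shows "hitting_time X p w = entrance_time X p w
        \<and> (entrance_time X p w < \<infinity> \<longrightarrow> X (real_of_ereal (entrance_time X p w)) w = p)"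
proof (cases "{t. 0 \<le> t \<and> p \<le> X t w} = {}")
  case True
  moreover have "{t. 0 \<le> t \<and> X t w = p} = {}" using True by auto
  ultimately show ?thesis by (simp only: entrance_time_def hitting_time_def image_empty Inf_empty) (simp add: top_ereal_def)
next
  case False
  let ?S = "{t. 0 \<le> t \<and> p \<le> X t w}"
  define s0 where "s0 = Inf ?S"
  have s0S: "s0 \<in> ?S" using path_min[where X=X and w=w and p=p, OF cont False] by (simp add: s0_def)
  have low: "\<And>s. s \<in> ?S \<Longrightarrow> s0 \<le> s" unfolding s0_def by (intro cInf_lower) (auto simp: bdd_below_def)
  have "continuous_on {0..s0} (\<lambda>t. X t w)" by (rule continuous_on_subset[OF cont]) auto
  then obtain u where u: "0 \<le> u" "u \<le> s0" "X u w = p"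
    using IVT'[of "\<lambda>t. X t w" 0 p s0] s0S x0 by auto
  then have "u \<in> ?S" by auto
  then have "u = s0" using low u by force
  then have Xs0: "X s0 w = p" using u by simp
  have ent: "entrance_time X p w = ereal s0" using entrance_eq[where X=X and w=w and p=p, OF cont] False s0_def by simp
  have "hitting_time X p w = ereal s0" unfolding hitting_time_def
    by (rule ereal_Inf_min) (use s0S Xs0 low in auto)
  then show ?thesis using ent Xs0 by simp
qed

lemma disc_formula:
  fixes X :: "real \<Rightarrow> 'w \<Rightarrow> real"
  assumes cont: "continuous_on {0..} (\<lambda>t. X t w)"
  shows "disc_payoff X \<rho> I p w = (if p \<le> X 0 w then X 0 w - I else (p - I) *
     (if hitting_time X p w < \<infinity> then exp (- \<rho> * real_of_ereal (hitting_time X p w)) else 0))"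
    and "disc_payoff X \<rho> I p w = (if p \<le> X 0 w then X 0 w - I else (p - I) *
     (if entrance_time X p w < \<infinity> then exp (- \<rho> * real_of_ereal (entrance_time X p w)) else 0))"
proof -
  have "disc_payoff X \<rho> I p w = (if p \<le> X 0 w then X 0 w - I else (p - I) *
     (if entrance_time X p w < \<infinity> then exp (- \<rho> * real_of_ereal (entrance_time X p w)) else 0))"
  proof (cases "p \<le> X 0 w")
    case True then show ?thesis by (simp add: disc_payoff_def entrance_start)
  next
    case False
    then show ?thesis using hit_eq[where X=X and w=w and p=p, OF cont] by (auto simp: disc_payoff_def Let_def)
  qed
  then show "disc_payoff X \<rho> I p w = (if p \<le> X 0 w then X 0 w - I else (p - I) *
     (if entrance_time X p w < \<infinity> then exp (- \<rho> * real_of_ereal (entrance_time X p w)) else 0))" .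
  then show "disc_payoff X \<rho> I p w = (if p \<le> X 0 w then X 0 w - I else (p - I) *
     (if hitting_time X p w < \<infinity> then exp (- \<rho> * real_of_ereal (hitting_time X p w)) else 0))"
    using hit_eq[where X=X and w=w and p=p, OF cont] by auto
qed

lemma exists_iff_rat:
  fixes X :: "real \<Rightarrow> 'w \<Rightarrow> real"
  assumes cont: "continuous_on {0..} (\<lambda>t. X t w)" and t0: "0 \<le> t"
  shows "(\<exists>s\<in>{0..t}. p \<le> X s w) \<longleftrightarrow> (\<forall>n::nat. \<exists>q\<in>\<rat> \<inter> {0..t}. p - 1 / Suc n < X q w)"
proof
  assume "\<exists>s\<in>{0..t}. p \<le> X s w"
  then obtain s where s: "0 \<le> s" "s \<le> t" "p \<le> X s w" by auto
  show "\<forall>n::nat. \<exists>q\<in>\<rat> \<inter> {0..t}. p - 1 / Suc n < X q w"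
  proof
    fix n :: nat
    have e: "(0::real) < 1 / Suc n" by simp
    have "continuous (at s within {0..t}) (\<lambda>t. X t w)"
      using continuous_on_subset[OF cont, of "{0..t}"] s
      by (auto simp: continuous_on_eq_continuous_within)
    then obtain d where d: "d > 0" "\<And>u. u \<in> {0..t} \<Longrightarrow> dist u s < d \<Longrightarrow> dist (X u w) (X s w) < 1 / Suc n"
      using e unfolding continuous_within_eps_delta by metis
    show "\<exists>q\<in>\<rat> \<inter> {0..t}. p - 1 / Suc n < X q w"
    proof (cases "t = 0")
      case True
      then have "s = 0" using s by simp
      have "p \<le> X 0 w" using s \<open>s = 0\<close> by simp
      then have "p - 1 / Suc n < X 0 w" using e by linarith
      then show ?thesis using True by (intro bexI[of _ 0]) auto
    next
      case False
      have "max 0 (s - d) < min t (s + d)" using s d False t0 by auto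
      then obtain q where q: "q \<in> \<rat>" "max 0 (s - d) < q" "q < min t (s + d)"
        using Rats_dense_in_real by blast
      then have "dist (X q w) (X s w) < 1 / Suc n" using d(2)[of q] by (auto simp: dist_real_def)
      then show ?thesis using q s by (intro bexI[of _ q]) (auto simp: dist_real_def)
    qed
  qed
next
  assume H: "\<forall>n::nat. \<exists>q\<in>\<rat> \<inter> {0..t}. p - 1 / Suc n < X q w"
  have "continuous_on {0..t} (\<lambda>t. X t w)" by (rule continuous_on_subset[OF cont]) auto
  then obtain s where s: "s \<in> {0..t}" "\<And>y. y \<in> {0..t} \<Longrightarrow> X y w \<le> X s w"
    using continuous_attains_sup[of "{0..t}" "\<lambda>t. X t w"] t0 by auto
  have "p \<le> X s w"
  proof (rule ccontr)
    assume "\<not> p \<le> X s w"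
    then obtain n :: nat where n0: "0 < n" "inverse (real n) < p - X s w"
      using ex_inverse_of_nat_less[of "p - X s w"] by auto
    have "1 / real (Suc n) \<le> inverse (real n)" using n0 by (simp add: field_simps)
    then have n: "1 / Suc n < p - X s w" using n0 by linarith
    obtain q where "q \<in> {0..t}" "p - 1 / Suc n < X q w" using H by blast
    then show False using s(2)[of q] n by auto
  qed
  then show "\<exists>s\<in>{0..t}. p \<le> X s w" using s by blast
qed

lemma entrance_le_iff:
  fixes X :: "real \<Rightarrow> 'w \<Rightarrow> real"
  assumes cont: "continuous_on {0..} (\<lambda>t. X t w)" and t0: "0 \<le> t"
  shows "entrance_time X p w \<le> ereal t \<longleftrightarrow> (\<exists>s\<in>{0..t}. p \<le> X s w)"
proof (cases "{t. 0 \<le> t \<and> p \<le> X t w} = {}")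
  case True
  then show ?thesis using entrance_eq[where X=X and w=w and p=p, OF cont] by auto
next
  case False
  let ?S = "{t. 0 \<le> t \<and> p \<le> X t w}"
  have s0S: "Inf ?S \<in> ?S" using path_min[where X=X and w=w and p=p, OF cont False] .
  have low: "\<And>s. s \<in> ?S \<Longrightarrow> Inf ?S \<le> s" by (intro cInf_lower) (auto simp: bdd_below_def)
  have e: "entrance_time X p w = ereal (Inf ?S)" using entrance_eq[where X=X and w=w and p=p, OF cont] False by simp
  show ?thesis
  proof
    assume "entrance_time X p w \<le> ereal t"
    then show "\<exists>s\<in>{0..t}. p \<le> X s w" using e s0S by (intro bexI[of _ "Inf ?S"]) auto
  next
    assume "\<exists>s\<in>{0..t}. p \<le> X s w"
    then obtain s where "s \<in> {0..t}" "p \<le> X s w" by blast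
    then have "Inf ?S \<le> t" using low[of s] by auto
    then show "entrance_time X p w \<le> ereal t" using e by simp
  qed
qed

lemma entrance_measurable:
  fixes X :: "real \<Rightarrow> 'w \<Rightarrow> real"
  assumes meas: "\<And>t. t \<ge> 0 \<Longrightarrow> X t \<in> borel_measurable N"
    and cont: "\<And>w. continuous_on {0..} (\<lambda>t. X t w)"
  shows "entrance_time X p \<in> borel_measurable N"
proof (rule borel_measurableI_le)
  fix y :: ereal
  show "{w \<in> space N. entrance_time X p w \<le> y} \<in> sets N"
  proof (cases y)
    case (real t)
    show ?thesis
    proof (cases "0 \<le> t")
      case True
      have "{w \<in> space N. entrance_time X p w \<le> y} =
        (\<Inter>n::nat. \<Union>q\<in>\<rat> \<inter> {0..t}. {w \<in> space N. p - 1 / Suc n < X q w})"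
        using entrance_le_iff[where X=X and p=p, OF cont True] exists_iff_rat[where X=X and p=p, OF cont True] real by auto
      also have "\<dots> \<in> sets N"
      proof -
        have m: "{w \<in> space N. p - 1 / Suc n < X q w} \<in> sets N" if "q \<in> \<rat> \<inter> {0..t}" for n :: nat and q
        proof -
          have "X q \<in> borel_measurable N" using meas that by auto
          then show ?thesis by measurable
        qed
        have c: "countable (\<rat> \<inter> {0..t})" using countable_rat by auto
        show ?thesis
          apply (rule sets.countable_INT)
           apply (rule image_subsetI)
           apply (rule sets.countable_UN''[OF c])
          using m by auto
      qed
      finally show ?thesis .
    next
      case False
      have "entrance_time X p w \<ge> 0" for w
        unfolding entrance_time_def by (rule Inf_greatest) auto
      then have "{w \<in> space N. entrance_time X p w \<le> y} = {}" using False real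
        by (metis (no_types, lifting) empty_Collect_eq ereal_less_eq(3) order.trans zero_ereal_def)
      then show ?thesis by (metis sets.empty_sets)
    qed
  next
    case PInf then show ?thesis by simp
  next
    case MInf
    have "entrance_time X p w \<ge> 0" for w
      unfolding entrance_time_def by (rule Inf_greatest) auto
    then have "{w \<in> space N. entrance_time X p w \<le> y} = {}" using MInf by auto
    then show ?thesis by (metis sets.empty_sets)
  qed
qed

lemma disc_measurable:
  fixes X :: "real \<Rightarrow> 'w \<Rightarrow> real"
  assumes meas: "\<And>t. t \<ge> 0 \<Longrightarrow> X t \<in> borel_measurable N"
    and cont: "\<And>w. continuous_on {0..} (\<lambda>t. X t w)"
  shows "disc_payoff X \<rho> I p \<in> borel_measurable N"
proof -
  have [measurable]: "entrance_time X p \<in> borel_measurable N" by (rule entrance_measurable[OF meas cont])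
  have [measurable]: "X 0 \<in> borel_measurable N" using meas by auto
  have "(\<lambda>w. if p \<le> X 0 w then X 0 w - I else (p - I) *
     (if entrance_time X p w < \<infinity> then exp (- \<rho> * real_of_ereal (entrance_time X p w)) else 0))
     \<in> borel_measurable N" by measurable
  moreover have "disc_payoff X \<rho> I p = (\<lambda>w. if p \<le> X 0 w then X 0 w - I else (p - I) *
     (if entrance_time X p w < \<infinity> then exp (- \<rho> * real_of_ereal (entrance_time X p w)) else 0))"
    by (rule ext, rule disc_formula(2)[where X=X, OF cont])
  ultimately show ?thesis by simp
qed

lemma value_formula:
  fixes X :: "real \<Rightarrow> 'w \<Rightarrow> real"
  assumes P: "prob_space N"
    and meas: "\<And>t. t \<ge> 0 \<Longrightarrow> X t \<in> borel_measurable N"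
    and cont: "\<And>w. continuous_on {0..} (\<lambda>t. X t w)"
    and start: "AE w in N. X 0 w = x"
    and lap: "x < p \<Longrightarrow> has_bochner_integral N
                      (\<lambda>w. if hitting_time X p w < \<infinity>
                           then exp (- \<rho> * real_of_ereal (hitting_time X p w)) else 0) c"
  shows "integral\<^sup>L N (disc_payoff X \<rho> I p) = (if p \<le> x then x - I else (p - I) * c)"
proof -
  have dm: "disc_payoff X \<rho> I p \<in> borel_measurable N" by (rule disc_measurable[OF meas cont])
  show ?thesis
  proof (cases "p \<le> x")
    case True
    have "AE w in N. disc_payoff X \<rho> I p w = x - I"
      using start by eventually_elim (use True disc_formula(1)[where X=X, OF cont] in auto)
    then have "integral\<^sup>L N (disc_payoff X \<rho> I p) = integral\<^sup>L N (\<lambda>_. x - I)"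
      by (intro integral_cong_AE[OF dm]) auto
    then show ?thesis using True prob_space.prob_space[OF P] by simp
  next
    case False
    let ?h = "\<lambda>w. if hitting_time X p w < \<infinity>
                           then exp (- \<rho> * real_of_ereal (hitting_time X p w)) else 0"
    have hb: "has_bochner_integral N ?h c" using lap False by simp
    have hm: "?h \<in> borel_measurable N" by (rule borel_measurable_has_bochner_integral[OF hb])
    have "AE w in N. disc_payoff X \<rho> I p w = (p - I) * ?h w"
      using start by eventually_elim (use False disc_formula(1)[where X=X, OF cont] in auto)
    then have "integral\<^sup>L N (disc_payoff X \<rho> I p) = integral\<^sup>L N (\<lambda>w. (p - I) * ?h w)"
      by (intro integral_cong_AE[OF dm]) (use hm in auto)
    also have "\<dots> = (p - I) * c" using has_bochner_integral_integral_eq[OF hb] by simp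
    finally show ?thesis using False by simp
  qed
qed

theorem theorem1:
  fixes l r :: ereal and D :: "real set"
    and M :: "real \<Rightarrow> 'w measure" and X :: "real \<Rightarrow> 'w \<Rightarrow> real"
    and a \<sigma> :: "real \<Rightarrow> real"
    and \<rho> I :: real
    and \<psi> \<psi>' \<psi>'' :: "real \<Rightarrow> real"
    and pstar :: real
  assumes lr: "l < r"
    and D_int: "is_interval D"
    and D_sub: "D \<subseteq> {x. l \<le> ereal x \<and> ereal x \<le> r}"
    and D_sup: "open_int l r \<subseteq> D"
    \<comment> \<open>coefficients\<close>
    and sigma_pos: "\<forall>y\<in>D. \<sigma> y > 0"
    and loc_int: "\<forall>x\<in>open_int l r. \<exists>\<epsilon>>0.
                    (\<lambda>y. (1 + \<bar>a y\<bar>) / (\<sigma> y)\<^sup>2) integrable_on {x - \<epsilon>..x + \<epsilon>}"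
    \<comment> \<open>the diffusion: a family of laws P^x on a common sample space\<close>
    and prob: "\<forall>x\<in>open_int l r. prob_space (M x)"
    and meas: "\<forall>x\<in>open_int l r. \<forall>t\<ge>0. X t \<in> borel_measurable (M x)"
    and cont_paths: "\<forall>w. continuous_on {0..} (\<lambda>t. X t w)"
    and in_D: "\<forall>w. \<forall>t\<ge>0. X t w \<in> D"
    and start: "\<forall>x\<in>open_int l r. AE w in M x. X 0 w = x"
    and regular: "\<forall>x\<in>open_int l r. \<forall>y\<in>open_int l r.
                    0 < measure (M x) {w \<in> space (M x). hitting_time X y w < \<infinity>}"
    \<comment> \<open>discount rate and investment cost\<close>
    and rho_pos: "\<rho> > 0"
    and I_lt: "ereal I < r"
    \<comment> \<open>increasing positive fundamental solution psi\<close>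
    and psi_pos: "\<forall>x\<in>open_int l r. 0 < \<psi> x"
    and psi_mono: "mono_on (open_int l r) \<psi>"
    and psi_deriv: "\<forall>x\<in>open_int l r. (\<psi> has_real_derivative \<psi>' x) (at x)"
    and psi'_ac: "\<forall>u\<in>open_int l r. \<forall>v\<in>open_int l r. u \<le> v \<longrightarrow>
                    \<psi>'' absolutely_integrable_on {u..v} \<and> (\<psi>'' has_integral (\<psi>' v - \<psi>' u)) {u..v}"
    and psi_ode: "AE y in lebesgue. y \<in> open_int l r \<longrightarrow>
                    a y * \<psi>' y + (1/2) * (\<sigma> y)\<^sup>2 * \<psi>'' y = \<rho> * \<psi> y"
    and laplace: "\<forall>x\<in>open_int l r. \<forall>p\<in>open_int l r. x < p \<longrightarrow>
                    has_bochner_integral (M x)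
                      (\<lambda>w. if hitting_time X p w < \<infinity>
                           then exp (- \<rho> * real_of_ereal (hitting_time X p w)) else 0)
                      (\<psi> x / \<psi> p)"
    and pstar_in: "pstar \<in> open_int l r"
  shows "(\<forall>p\<in>open_int l r. \<forall>x\<in>open_int l r. value_fn M X \<rho> I pstar x \<ge> value_fn M X \<rho> I p x)
         \<longleftrightarrow>
         ((\<forall>p\<in>open_int l r. p < pstar \<longrightarrow> (p - I) / \<psi> p \<le> (pstar - I) / \<psi> pstar) \<and>
          (\<forall>p\<in>open_int l r. \<forall>q\<in>open_int l r. pstar \<le> p \<longrightarrow> p \<le> q \<longrightarrow>
              (q - I) / \<psi> q \<le> (p - I) / \<psi> p))"

proof -
  let ?O = "open_int l r"
  define f where "f q = (q - I) / \<psi> q" for q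
  have V: "value_fn M X \<rho> I p x = \<psi> x * f (max p x)" if x: "x \<in> ?O" and p: "p \<in> ?O" for p x
  proof -
    have "value_fn M X \<rho> I p x = (if p \<le> x then x - I else (p - I) * (\<psi> x / \<psi> p))"
      unfolding value_fn_def
      by (rule value_formula) (use prob meas cont_paths start laplace x p in auto)
    then show ?thesis using psi_pos x p by (auto simp: f_def max_def)
  qed
  have maxO: "max p x \<in> ?O" if "x \<in> ?O" "p \<in> ?O" for p x using that by (auto simp: max_def)
  have "(\<forall>p\<in>?O. \<forall>x\<in>?O. value_fn M X \<rho> I pstar x \<ge> value_fn M X \<rho> I p x) \<longleftrightarrow>
        (\<forall>p\<in>?O. \<forall>x\<in>?O. f (max pstar x) \<ge> f (max p x))"
    using V psi_pos pstar_in by (auto simp: mult_le_cancel_left_pos)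
  also have "\<dots> \<longleftrightarrow> ((\<forall>p\<in>?O. p < pstar \<longrightarrow> f p \<le> f pstar) \<and>
          (\<forall>p\<in>?O. \<forall>q\<in>?O. pstar \<le> p \<longrightarrow> p \<le> q \<longrightarrow> f q \<le> f p))"
  proof
    assume H: "\<forall>p\<in>?O. \<forall>x\<in>?O. f (max pstar x) \<ge> f (max p x)"
    show "(\<forall>p\<in>?O. p < pstar \<longrightarrow> f p \<le> f pstar) \<and>
          (\<forall>p\<in>?O. \<forall>q\<in>?O. pstar \<le> p \<longrightarrow> p \<le> q \<longrightarrow> f q \<le> f p)"
    proof safe
      fix p assume "p \<in> ?O" "p < pstar"
      then show "f p \<le> f pstar" using H[rule_format, of p p] by (simp add: max_def)
    next
      fix p q assume "p \<in> ?O" "q \<in> ?O" "pstar \<le> p" "p \<le> q"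
      then show "f q \<le> f p" using H[rule_format, of q p] by (simp add: max_def)
    qed
  next
    assume H: "(\<forall>p\<in>?O. p < pstar \<longrightarrow> f p \<le> f pstar) \<and>
          (\<forall>p\<in>?O. \<forall>q\<in>?O. pstar \<le> p \<longrightarrow> p \<le> q \<longrightarrow> f q \<le> f p)"
    show "\<forall>p\<in>?O. \<forall>x\<in>?O. f (max pstar x) \<ge> f (max p x)"
    proof (intro ballI)
      fix p x assume p: "p \<in> ?O" and x: "x \<in> ?O"
      have mO: "max p x \<in> ?O" using maxO[OF x p] .
      show "f (max pstar x) \<ge> f (max p x)"
      proof (cases "x \<le> pstar")
        case True
        then have e: "max pstar x = pstar" by simp
        show ?thesis
        proof (cases "max p x < pstar")
          case True then show ?thesis using H mO e by auto
        next
          case False then show ?thesis using H mO e pstar_in by auto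
        qed
      next
        case False
        then have "max pstar x = x" by simp
        then show ?thesis using H mO x False by auto
      qed
    qed
  qed
  finally show ?thesis unfolding f_def .
qed

end
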